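(* Every countable ring $R$ admits a proper norm. More precisely, let $w\colon R\to\mathbb N$ be a finite-to-one function with $w(0)=0$, $w(r)\ge2$ for $r\ne0$, and $w(r)=w(-r)$; extend $w$ to all terms $t$ in the language $\{+,\cdot\}\cup R$ (constants from $R$) by $w(t_1+t_2)=w(t_1)+w(t_2)$ and $w(t_1\cdot t_2)=w(t_1)w(t_2)$, and let $|r|$ be the minimum of $w(t)$ over all terms $t$ whose value in $R$ is $r$. Then $|\cdot|$ is a proper norm on $R$.
   Context: All rings are unital. A norm on a ring $R$ is a function $|\cdot|\colon R\to[0,\infty)$ such that $(a,b)\mapsto|a-b|$ is a metric on $R$ and $|rs|\le|r||s|$ for all $r,s\in R$; it is proper if every closed ball of this metric is compact. *)

theory Defs
  imports "HOL-Analysis.Analysis"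
begin

definition ring_norm :: "('a::ring_1 \<Rightarrow> real) \<Rightarrow> bool" where
  "ring_norm N \<longleftrightarrow> (\<forall>x. N x \<ge> 0)
      \<and> Metric_space UNIV (\<lambda>a b. N (a - b))
      \<and> (\<forall>r s. N (r * s) \<le> N r * N s)"

definition proper_ring_norm :: "('a::ring_1 \<Rightarrow> real) \<Rightarrow> bool" where
  "proper_ring_norm N \<longleftrightarrow> ring_norm N
      \<and> (\<forall>x r. compactin (Metric_space.mtopology UNIV (\<lambda>a b. N (a - b)))
                         (Metric_space.mcball UNIV (\<lambda>a b. N (a - b)) x r))"

datatype 'a rterm = Const 'a | Add "'a rterm" "'a rterm" | Mul "'a rterm" "'a rterm"

primrec rterm_val :: "'a::ring_1 rterm \<Rightarrow> 'a" where
  "rterm_val (Const r) = r"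
| "rterm_val (Add t1 t2) = rterm_val t1 + rterm_val t2"
| "rterm_val (Mul t1 t2) = rterm_val t1 * rterm_val t2"

primrec rterm_weight :: "('a \<Rightarrow> nat) \<Rightarrow> 'a rterm \<Rightarrow> nat" where
  "rterm_weight w (Const r) = w r"
| "rterm_weight w (Add t1 t2) = rterm_weight w t1 + rterm_weight w t2"
| "rterm_weight w (Mul t1 t2) = rterm_weight w t1 * rterm_weight w t2"

definition term_norm :: "('a::ring_1 \<Rightarrow> nat) \<Rightarrow> 'a \<Rightarrow> real" where
  "term_norm w r = real (LEAST n. \<exists>t. rterm_val t = r \<and> rterm_weight w t = n)"

definition admissible_weight :: "('a::ring_1 \<Rightarrow> nat) \<Rightarrow> bool" where
  "admissible_weight w \<longleftrightarrow> (\<forall>n. finite {r. w r = n})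
      \<and> w 0 = 0 \<and> (\<forall>r. r \<noteq> 0 \<longrightarrow> w r \<ge> 2) \<and> (\<forall>r. w r = w (- r))"

end

theory Submission
  imports Defs
begin

definition tn :: "('a::ring_1 \<Rightarrow> nat) \<Rightarrow> 'a \<Rightarrow> nat" where
  "tn w r = (LEAST n. \<exists>t. rterm_val t = r \<and> rterm_weight w t = n)"

lemma term_norm_tn: "term_norm w r = real (tn w r)"
  by (simp add: term_norm_def tn_def)

lemma tn_le: "rterm_val t = r \<Longrightarrow> tn w r \<le> rterm_weight w t"
  unfolding tn_def by (rule Least_le) blast

lemma tn_ach: "\<exists>t. rterm_val t = r \<and> rterm_weight w t = tn w r"
  unfolding tn_def by (rule LeastI_ex) (rule exI[of _ "w r"], rule exI[of _ "Const r"], simp)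

lemma weight0:
  assumes "admissible_weight w" shows "rterm_weight w t = 0 \<Longrightarrow> rterm_val t = (0::'a::ring_1)"
proof (induction t)
  case (Const r)
  have "r \<noteq> 0 \<Longrightarrow> w r \<ge> 2" using assms unfolding admissible_weight_def by blast
  then show ?case using Const by (cases "r = 0") auto
qed auto

lemma weight_ne1:
  assumes "admissible_weight w" shows "rterm_weight w (t::'a::ring_1 rterm) \<noteq> 1"
proof (induction t)
  case (Const r)
  have "r \<noteq> 0 \<Longrightarrow> w r \<ge> 2" "w 0 = 0" using assms unfolding admissible_weight_def by blast+
  then show ?case by (cases "r = 0") auto
next
  case (Add t1 t2) then show ?case by (auto simp: add_is_1)
qed auto

fun negt :: "'a::ring_1 rterm \<Rightarrow> 'a rterm" where
  "negt (Const r) = Const (- r)"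
| "negt (Add a b) = Add (negt a) (negt b)"
| "negt (Mul a b) = Mul (negt a) b"

lemma negt_val: "rterm_val (negt t) = - rterm_val t"
  by (induction t) auto

lemma negt_weight: "admissible_weight w \<Longrightarrow> rterm_weight w (negt t) = rterm_weight w t"
  by (induction t) (auto simp: admissible_weight_def)

lemma tn_neg_le: "admissible_weight w \<Longrightarrow> tn w (- r) \<le> tn w r"
proof -
  assume a: "admissible_weight w"
  obtain t where t: "rterm_val t = r" "rterm_weight w t = tn w r" using tn_ach by blast
  have "tn w (- r) \<le> rterm_weight w (negt t)" by (rule tn_le) (simp add: negt_val t)
  then show ?thesis using negt_weight[OF a] t by simp
qed

lemma tn_neg: "admissible_weight w \<Longrightarrow> tn w (- r) = tn w r"
proof -
  assume a: "admissible_weight w"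
  have "tn w (- (- r)) \<le> tn w (- r)" by (rule tn_neg_le[OF a])
  then show ?thesis using tn_neg_le[OF a, of r] by simp
qed

lemma tn_add: "tn w (a + b) \<le> tn w a + tn w b"
proof -
  obtain s t where "rterm_val s = a" "rterm_weight w s = tn w a"
     "rterm_val t = b" "rterm_weight w t = tn w b" using tn_ach by metis
  then show ?thesis using tn_le[of "Add s t" "a+b" w] by simp
qed

lemma tn_mult: "tn w (a * b) \<le> tn w a * tn w b"
proof -
  obtain s t where "rterm_val s = a" "rterm_weight w s = tn w a"
     "rterm_val t = b" "rterm_weight w t = tn w b" using tn_ach by metis
  then show ?thesis using tn_le[of "Mul s t" "a*b" w] by simp
qed

lemma tn_zero_iff: "admissible_weight w \<Longrightarrow> tn w r = 0 \<longleftrightarrow> r = 0"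
proof
  assume a: "admissible_weight w" and z: "tn w r = 0"
  obtain t where t: "rterm_val t = r" "rterm_weight w t = tn w r" using tn_ach by blast
  then show "r = 0" using weight0[OF a, of t] z by simp
next
  assume a: "admissible_weight w" and "r = 0"
  have "tn w 0 \<le> rterm_weight w (Const 0)" by (rule tn_le) simp
  then show "tn w r = 0" using a \<open>r = 0\<close> by (simp add: admissible_weight_def)
qed

lemma mulbound: "(a::nat) \<ge> 2 \<Longrightarrow> b \<ge> 2 \<Longrightarrow> a * b \<le> k \<Longrightarrow> a \<le> k - 1 \<and> b \<le> k - 1"
proof -
  assume h: "a \<ge> 2" "b \<ge> 2" "a * b \<le> k"
  have "a * 2 \<le> a * b" "2 * b \<le> a * b" using h by auto
  then show ?thesis using h by linarith
qed

lemma finite_G: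
  assumes adm: "admissible_weight w"
  shows "finite {rterm_val t | t::'a::ring_1 rterm. rterm_weight w t \<le> k}"
proof (induction k rule: less_induct)
  case (less k)
  show ?case
  proof (cases "k = 0")
    case True
    then have "{rterm_val t | t::'a rterm. rterm_weight w t \<le> k} \<subseteq> {0}"
      using weight0[OF adm] by auto
    then show ?thesis using finite_subset by blast
  next
    case False
    define G where "G = {rterm_val t | t::'a rterm. rterm_weight w t \<le> k - 1}"
    have fG: "finite G" unfolding G_def using less False by simp
    have fw: "finite {r. w r \<le> k}"
    proof -
      have "{r. w r \<le> k} = (\<Union>n\<in>{..k}. {r. w r = n})" by auto
      then show ?thesis using adm by (simp add: admissible_weight_def)
    qed
    define F where "F = {0} \<union> {r. w r \<le> k} \<union> (\<lambda>(x,y). x+y) ` (G \<times> G) \<union> (\<lambda>(x,y). x*y) ` (G \<times> G)"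
    have fF: "finite F" unfolding F_def using fG fw by auto
    have key: "rterm_weight w t \<le> k \<Longrightarrow> rterm_val t \<in> F" for t
    proof (induction t)
      case (Const r) then show ?case by (simp add: F_def)
    next
      case (Add t1 t2)
      show ?case
      proof (cases "rterm_weight w t1 = 0")
        case True
        then show ?thesis using Add weight0[OF adm] by auto
      next
        case f1: False
        show ?thesis
        proof (cases "rterm_weight w t2 = 0")
          case True
          then show ?thesis using Add weight0[OF adm] by auto
        next
          case False
          then have "rterm_val t1 \<in> G" "rterm_val t2 \<in> G" using f1 Add.prems unfolding G_def by force+
          then show ?thesis unfolding F_def by force
        qed
      qed
    next
      case (Mul t1 t2)
      show ?case
      proof (cases "rterm_weight w t1 = 0 \<or> rterm_weight w t2 = 0")
        case True
        then show ?thesis using weight0[OF adm] by (auto simp: F_def)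
      next
        case False
        then have "rterm_weight w t1 \<ge> 2" "rterm_weight w t2 \<ge> 2"
          using weight_ne1[OF adm, of t1] weight_ne1[OF adm, of t2] by linarith+
        then have "rterm_weight w t1 \<le> k - 1" "rterm_weight w t2 \<le> k - 1"
          using Mul.prems mulbound[of "rterm_weight w t1" "rterm_weight w t2" k] by simp_all
        then have "rterm_val t1 \<in> G" "rterm_val t2 \<in> G" unfolding G_def by force+
        then show ?thesis unfolding F_def by force
      qed
    qed
    have "{rterm_val t | t::'a rterm. rterm_weight w t \<le> k} \<subseteq> F" using key by auto
    then show ?thesis using fF finite_subset by blast
  qed
qed

lemma part2:
  assumes adm: "admissible_weight (w :: 'a::ring_1 \<Rightarrow> nat)"
  shows "proper_ring_norm (term_norm w)"
proof -
  let ?d = "\<lambda>a b::'a. term_norm w (a - b)"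
  have ms: "Metric_space UNIV ?d"
  proof
    fix x y :: 'a
    show "0 \<le> ?d x y" by (simp add: term_norm_tn)
    have "tn w (x - y) = tn w (- (y - x))" by simp
    then show "?d x y = ?d y x" using tn_neg[OF adm, of "y - x"] by (simp add: term_norm_tn)
    show "?d x y = 0 \<longleftrightarrow> x = y" using tn_zero_iff[OF adm, of "x - y"] by (simp add: term_norm_tn)
  next
    fix x y z :: 'a
    have "tn w (x - z) \<le> tn w (x - y) + tn w (y - z)" using tn_add[of w "x - y" "y - z"] by simp
    then show "?d x z \<le> ?d x y + ?d y z" by (simp add: term_norm_tn)
  qed
  have rn: "ring_norm (term_norm w)"
    unfolding ring_norm_def using ms tn_mult[of w]
    by (simp add: term_norm_tn) (metis of_nat_mult of_nat_le_iff)
  have cpt: "compactin (Metric_space.mtopology UNIV ?d) (Metric_space.mcball UNIV ?d x r)" for x r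
  proof -
    define k where "k = nat \<lfloor>r\<rfloor>"
    define G where "G = {rterm_val t | t::'a rterm. rterm_weight w t \<le> k}"
    have fG: "finite G" unfolding G_def by (rule finite_G[OF adm])
    have sub: "Metric_space.mcball UNIV ?d x r \<subseteq> (\<lambda>v. x - v) ` G"
    proof
      fix y assume "y \<in> Metric_space.mcball UNIV ?d x r"
      then have le: "real (tn w (x - y)) \<le> r" using Metric_space.in_mcball[OF ms] by (simp add: term_norm_tn)
      then have "tn w (x - y) \<le> k" unfolding k_def by linarith
      moreover obtain t where "rterm_val t = x - y" "rterm_weight w t = tn w (x - y)" using tn_ach by blast
      ultimately have "rterm_weight w t \<le> k" "rterm_val t = x - y" by simp_all
      then have "x - y \<in> G" unfolding G_def by (intro CollectI exI[of _ t]) simp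
      then show "y \<in> (\<lambda>v. x - v) ` G" by (rule rev_image_eqI) simp
    qed
    have "finite (Metric_space.mcball UNIV ?d x r)" using sub fG finite_subset by blast
    then show ?thesis
      by (intro finite_imp_compactin) (simp_all add: Metric_space.topspace_mtopology[OF ms])
  qed
  show ?thesis unfolding proper_ring_norm_def using rn cpt by blast
qed

lemma part1:
  assumes "countable (UNIV :: 'a::ring_1 set)"
  shows "\<exists>w :: 'a \<Rightarrow> nat. admissible_weight w"
proof -
  obtain f :: "'a \<Rightarrow> nat" where inj: "inj f" using assms by (auto simp: countable_def)
  define w where "w r = (if r = 0 then 0 else 2 + f r + f (- r))" for r
  have "finite {r. w r = n}" for n
  proof -
    have "{r. w r = n} \<subseteq> insert 0 (f -` {..n})" by (auto simp: w_def)
    moreover have "finite (insert 0 (f -` {..n}))" by (simp add: finite_vimageI inj)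
    ultimately show ?thesis using finite_subset by blast
  qed
  then have "admissible_weight w" unfolding admissible_weight_def by (auto simp: w_def)
  then show ?thesis by blast
qed

theorem mainTheorem11:
  shows "(countable (UNIV :: 'a::ring_1 set) \<longrightarrow> (\<exists>N :: 'a \<Rightarrow> real. proper_ring_norm N))
       \<and> (\<forall>w :: 'a \<Rightarrow> nat. admissible_weight w \<longrightarrow> proper_ring_norm (term_norm w))"
  using part1 part2 by blast

end
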